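(* Let $q,r,\nu$ be positive integers. The subspace of vectors $x\in\mathbb{C}^{\nu r}$ (not depending on $z$) with $\mathcal{M}^0(z)x=0$ for all $z$, i.e. $\bigcap_z\ker\mathcal{M}^0(z)$, has dimension $(\nu-q)^+r$. This subspace equals the kernel of $\mathcal{M}(z)$ for $\mu=r$, which is the same for all $z$.
   Context: Matrix indices start at $0$. $u(z)=(1,\dots,z^{q-1})^\top$, $w(z)=(1,\dots,z^{r-1})$, $M(z)=u(z)w(z)$. $\mathcal{M}^0(z)=(M(z),M'(z),\dots,M^{(\nu-1)}(z))\in\mathbb{C}^{q\times\nu r}$, and, for a positive integer $\mu$, $\mathcal{M}(z)\in\mathbb{C}^{\mu q\times\nu r}$ is the block matrix with $(i,j)$ block $M^{(i+j)}(z)$, $i=0,\dots,\mu-1$, $j=0,\dots,\nu-1$. *)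

theory Defs
  imports "HOL-Analysis.Analysis" "Jordan_Normal_Form.Matrix_Kernel"
begin

definition uvec :: "nat \<Rightarrow> complex \<Rightarrow> complex mat" where
  "uvec q z = mat q 1 (\<lambda>(i,j). z ^ i)"

definition wvec :: "nat \<Rightarrow> complex \<Rightarrow> complex mat" where
  "wvec r z = mat 1 r (\<lambda>(i,j). z ^ j)"

definition Mmat :: "nat \<Rightarrow> nat \<Rightarrow> complex \<Rightarrow> complex mat" where
  "Mmat q r z = uvec q z * wvec r z"

definition Mder :: "nat \<Rightarrow> nat \<Rightarrow> nat \<Rightarrow> complex \<Rightarrow> complex mat" where
  "Mder q r k z = mat q r (\<lambda>(i,j). (deriv ^^ k) (\<lambda>w. Mmat q r w $$ (i,j)) z)"

(* M^0(z) = (M(z), M'(z), ..., M^(nu-1)(z)), a q x (nu*r) matrix *)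
definition M0mat :: "nat \<Rightarrow> nat \<Rightarrow> nat \<Rightarrow> complex \<Rightarrow> complex mat" where
  "M0mat q r \<nu> z = mat q (\<nu> * r) (\<lambda>(i,c). Mder q r (c div r) z $$ (i, c mod r))"

(* calligraphic M(z): (mu*q) x (nu*r) block matrix with (i,j) block M^(i+j)(z) *)
definition Mcal :: "nat \<Rightarrow> nat \<Rightarrow> nat \<Rightarrow> nat \<Rightarrow> complex \<Rightarrow> complex mat" where
  "Mcal q r \<mu> \<nu> z = mat (\<mu> * q) (\<nu> * r)
     (\<lambda>(a,c). Mder q r (a div q + c div r) z $$ (a mod q, c mod r))"

definition common_kernel :: "nat \<Rightarrow> nat \<Rightarrow> nat \<Rightarrow> complex vec set" where
  "common_kernel q r \<nu> = (\<Inter>z. mat_kernel (M0mat q r \<nu> z))"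

definition subspace_dim :: "nat \<Rightarrow> complex vec set \<Rightarrow> nat" where
  "subspace_dim n W = vectorspace.dim class_ring ((module_vec TYPE(complex) n)\<lparr>carrier := W\<rparr>)"

end

theory Submission
  imports Defs
begin


lemma hp_X:
  fixes f :: "complex poly"
  shows "(pderiv ^^ n) (monom 1 1 * f) = monom 1 1 * (pderiv ^^ n) f + Polynomial.smult (of_nat n) ((pderiv ^^ (n - 1)) f)"
proof (induction n)
  case 0 then show ?case by simp
next
  case (Suc n)
  have "(pderiv ^^ Suc n) (monom 1 1 * f) = pderiv ((pderiv ^^ n) (monom 1 1 * f))" by simp
  also have "\<dots> = pderiv (monom 1 1 * (pderiv ^^ n) f) + Polynomial.smult (of_nat n) (pderiv ((pderiv ^^ (n - 1)) f))"
    using Suc by (simp add: pderiv_add pderiv_smult)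
  also have "pderiv ((pderiv ^^ (n - 1)) f) = (if n = 0 then pderiv f else (pderiv ^^ n) f)"
    by (cases n) simp_all
  also have "pderiv (monom 1 1 * (pderiv ^^ n) f) = monom 1 1 * (pderiv ^^ Suc n) f + (pderiv ^^ n) f"
    by (simp add: pderiv_mult pderiv_monom)
  also have "monom 1 1 * (pderiv ^^ Suc n) f + (pderiv ^^ n) f + Polynomial.smult (of_nat n) (if n = 0 then pderiv f else (pderiv ^^ n) f)
     = monom 1 1 * (pderiv ^^ Suc n) f + Polynomial.smult (of_nat (Suc n)) ((pderiv ^^ (Suc n - 1)) f)"
    by (cases n) (simp_all del: funpow.simps add: smult_add_left numeral_mult_conv_smult)
  finally show ?case by (simp only: add.assoc)
qed

lemma deriv_poly_funpow: "(deriv ^^ k) (poly p) = poly ((pderiv ^^ k) (p :: complex poly))"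
proof (induction k)
  case 0 then show ?case by simp
next
  case (Suc k)
  have "(deriv ^^ Suc k) (poly p) = deriv (poly ((pderiv ^^ k) p))" using Suc by simp
  also have "\<dots> = poly (pderiv ((pderiv ^^ k) p))"
    by (rule ext, rule DERIV_imp_deriv, rule poly_DERIV)
  finally show ?case by simp
qed

lemma choose_rec_aux: "(k choose s) * (k - s) = Suc s * (k choose Suc s)"
  by (metis binomial_absorb_comp binomial_absorption mult.commute)

definition Hp :: "nat \<Rightarrow> nat \<Rightarrow> complex vec \<Rightarrow> nat \<Rightarrow> nat \<Rightarrow> complex poly" where
  "Hp r \<nu> x i s = (\<Sum>c<\<nu>*r. Polynomial.smult (x$c * of_nat ((c div r) choose s))
      ((pderiv^^(c div r - s)) (monom 1 (i + c mod r))))"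

lemma Hp_term:
  fixes a :: complex
  shows "Polynomial.smult (a * of_nat (k choose s)) ((pderiv^^(k - s)) (monom 1 (Suc i + m)))
   = monom 1 1 * Polynomial.smult (a * of_nat (k choose s)) ((pderiv^^(k - s)) (monom 1 (i + m)))
     + Polynomial.smult (of_nat (Suc s)) (Polynomial.smult (a * of_nat (k choose Suc s)) ((pderiv^^(k - Suc s)) (monom 1 (i + m))))"
proof -
  have m: "monom (1::complex) (Suc i + m) = monom 1 1 * monom 1 (i + m)" by (simp add: mult_monom)
  have c: "a * (of_nat (k choose s) * of_nat (k - s)) = (1 + of_nat s) * (a * of_nat (k choose Suc s))"
  proof -
    have "(of_nat (k choose s) :: complex) * of_nat (k - s) = of_nat (Suc s) * of_nat (k choose Suc s)"
      by (metis choose_rec_aux of_nat_mult)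
    then show ?thesis by (simp add: algebra_simps)
  qed
  have d: "k - s - 1 = k - Suc s" by simp
  show ?thesis unfolding m hp_X d
    by (simp add: smult_add_right mult.assoc c)
qed

lemma smult_sum_r: "Polynomial.smult a (sum f S) = (\<Sum>x\<in>S. Polynomial.smult a (f x))"
  by (induction S rule: infinite_finite_induct) (simp_all add: smult_add_right)

lemma Hp_rec: "Hp r \<nu> x (Suc i) s = monom 1 1 * Hp r \<nu> x i s + Polynomial.smult (of_nat (Suc s)) (Hp r \<nu> x i (Suc s))"
  unfolding Hp_def Hp_term
  by (simp add: sum.distrib sum_distrib_left smult_sum_r)

lemma F2:
  assumes "\<forall>s<q. Hp r \<nu> x 0 s = 0"
  shows "i + s < q \<Longrightarrow> Hp r \<nu> x i s = 0"
proof (induction i arbitrary: s)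
  case 0 then show ?case using assms by simp
next
  case (Suc i)
  have "Hp r \<nu> x i s = 0" "Hp r \<nu> x i (Suc s) = 0" using Suc by auto
  then show ?case by (simp add: Hp_rec)
qed

lemma F1:
  assumes cl1: "\<And>f g. J f \<Longrightarrow> J g \<Longrightarrow> J (f - g)"
    and cl2: "\<And>f. J f \<Longrightarrow> J (monom 1 1 * f)"
    and cl3: "\<And>a f. J f \<Longrightarrow> J (Polynomial.smult a f)"
    and h: "\<forall>i<q. J (Hp r \<nu> x i 0)"
  shows "i + s < q \<Longrightarrow> J (Hp r \<nu> x i s)"
proof (induction s arbitrary: i)
  case 0 then show ?case using h by simp
next
  case (Suc s)
  have a: "J (Hp r \<nu> x (Suc i) s)" "J (Hp r \<nu> x i s)" using Suc by auto
  have "Hp r \<nu> x i (Suc s) = Polynomial.smult (inverse (of_nat (Suc s)))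
      (Hp r \<nu> x (Suc i) s - monom 1 1 * Hp r \<nu> x i s)"
    by (simp add: Hp_rec del: of_nat_Suc)
  then show ?case using a cl1 cl2 cl3 by metis
qed

lemma jet_dvd: "(\<forall>a<n. poly ((pderiv^^a) f) z0 = 0) \<longleftrightarrow> [:-z0,1:]^n dvd (f::complex poly)"
proof (induction n arbitrary: f)
  case 0 then show ?case by simp
next
  case (Suc n)
  have "(\<forall>a<Suc n. poly ((pderiv^^a) f) z0 = 0) \<longleftrightarrow>
        poly f z0 = 0 \<and> (\<forall>a<n. poly ((pderiv^^a) (pderiv f)) z0 = 0)"
    by (auto simp del: funpow.simps simp: funpow_Suc_right less_Suc_eq_0_disj)
  also have "\<dots> \<longleftrightarrow> poly f z0 = 0 \<and> [:-z0,1:]^n dvd pderiv f" using Suc by simp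
  also have "\<dots> \<longleftrightarrow> [:-z0,1:]^Suc n dvd f"
  proof (cases "f = 0")
    case True then show ?thesis by simp
  next
    case False
    show ?thesis
    proof
      assume A: "poly f z0 = 0 \<and> [:-z0,1:]^n dvd pderiv f"
      have "pderiv f \<noteq> 0"
      proof
        assume "pderiv f = 0"
        then obtain h where "f = [:h:]" using pderiv_iszero by blast
        then show False using A False by simp
      qed
      then have "n \<le> Polynomial.order z0 (pderiv f)" using A order_divides by blast
      moreover have "Polynomial.order z0 f = Suc (Polynomial.order z0 (pderiv f))" using order_pderiv False A by blast
      ultimately show "[:-z0,1:]^Suc n dvd f" using order_divides by (metis Suc_le_mono)
    next
      assume B: "[:-z0,1:]^Suc n dvd f"
      then have o: "Suc n \<le> Polynomial.order z0 f" using False order_divides by blast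
      then have r: "poly f z0 = 0" using order_root by (metis False not_less_eq_eq zero_le)
      have "Polynomial.order z0 f = Suc (Polynomial.order z0 (pderiv f))" using order_pderiv False r by blast
      then have "n \<le> Polynomial.order z0 (pderiv f)" using o by simp
      then have "[:-z0,1:]^n dvd pderiv f" using order_divides by blast
      then show "poly f z0 = 0 \<and> [:-z0,1:]^n dvd pderiv f" using r by simp
    qed
  qed
  finally show ?case .
qed

lemma Hp0_degree:
  assumes "r > 0" shows "degree (Hp r \<nu> x 0 s) \<le> r - 1"
  unfolding Hp_def
proof (rule degree_sum_le)
  show "finite {..<\<nu> * r}" by simp
  fix c assume "c \<in> {..<\<nu> * r}"
  have "degree (Polynomial.smult (x $ c * of_nat (c div r choose s))
          ((pderiv ^^ (c div r - s)) (monom (1::complex) (0 + c mod r)))) \<le>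
        degree ((pderiv ^^ (c div r - s)) (monom (1::complex) (0 + c mod r)))"
    by (rule degree_smult_le)
  also have "\<dots> \<le> degree (monom (1::complex) (0 + c mod r))"
    by (simp only: degree_higher_pderiv diff_le_self)
  also have "\<dots> \<le> 0 + c mod r" by (rule degree_monom_le)
  also have "\<dots> \<le> r - 1"
  proof -
    have "c mod r < r" using assms by simp
    then show ?thesis by linarith
  qed
  finally show "degree (Polynomial.smult (x $ c * of_nat (c div r choose s))
          ((pderiv ^^ (c div r - s)) (monom 1 (0 + c mod r)))) \<le> r - 1" .
qed

lemma Hp0_zero:
  assumes "r > 0" and "[:-z0,1:]^r dvd Hp r \<nu> x 0 s"
  shows "Hp r \<nu> x 0 s = 0"
proof (rule ccontr)
  assume "Hp r \<nu> x 0 s \<noteq> 0"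
  then have "degree ([:-z0,1:]^r) \<le> degree (Hp r \<nu> x 0 s)"
    using assms(2) dvd_imp_degree_le by blast
  then show False using Hp0_degree[OF assms(1), of \<nu> x s] assms(1)
    by (simp add: degree_linear_power)
qed

lemma Mmat_fun:
  assumes "i < q" "j < r"
  shows "(\<lambda>w. Mmat q r w $$ (i,j)) = poly (monom 1 (i+j))"
  using assms by (auto simp: Mmat_def uvec_def wvec_def scalar_prod_def poly_monom power_add)

lemma Mder_entry:
  assumes "i < q" "j < r"
  shows "Mder q r k z $$ (i,j) = poly ((pderiv^^k) (monom 1 (i+j))) z"
  using assms by (simp add: Mder_def Mmat_fun deriv_poly_funpow)

lemma M0_entry:
  assumes x: "x \<in> carrier_vec (\<nu> * r)" and i: "i < q" and r: "r > 0"
  shows "(M0mat q r \<nu> z *\<^sub>v x) $ i = poly (Hp r \<nu> x i 0) z"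
proof -
  have "(M0mat q r \<nu> z *\<^sub>v x) $ i = (\<Sum>c\<in>{0..<\<nu>*r}. M0mat q r \<nu> z $$ (i,c) * x $ c)"
    using x i by (simp add: M0mat_def scalar_prod_def)
  also have "\<dots> = (\<Sum>c\<in>{0..<\<nu>*r}. poly ((pderiv^^(c div r)) (monom 1 (i + c mod r))) z * x $ c)"
    using i r by (intro sum.cong refl) (simp add: M0mat_def Mder_entry)
  also have "\<dots> = poly (Hp r \<nu> x i 0) z"
    unfolding Hp_def poly_sum by (simp add: lessThan_atLeast0 mult.commute)
  finally show ?thesis .
qed

lemma Mcal_entry:
  assumes x: "x \<in> carrier_vec (\<nu> * r)" and i: "i < q" and a: "a < r"
  shows "(Mcal q r r \<nu> z *\<^sub>v x) $ (a * q + i) = poly ((pderiv^^a) (Hp r \<nu> x i 0)) z"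
proof -
  have r: "r > 0" using a by simp
  have aq: "a * q + i < r * q"
  proof -
    have "a * q + i < a * q + q" using i by simp
    also have "\<dots> = Suc a * q" by simp
    also have "\<dots> \<le> r * q" using a by (intro mult_right_mono) auto
    finally show ?thesis .
  qed
  have dm: "(a * q + i) div q = a" "(a * q + i) mod q = i" using i by auto
  have "(Mcal q r r \<nu> z *\<^sub>v x) $ (a * q + i) = (\<Sum>c\<in>{0..<\<nu>*r}. Mcal q r r \<nu> z $$ (a * q + i,c) * x $ c)"
    using x aq by (simp add: Mcal_def scalar_prod_def)
  also have "\<dots> = (\<Sum>c\<in>{0..<\<nu>*r}. poly ((pderiv^^(a + c div r)) (monom 1 (i + c mod r))) z * x $ c)"
    using i r aq by (intro sum.cong refl) (simp add: Mcal_def Mder_entry dm)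
  also have "\<dots> = poly ((pderiv^^a) (Hp r \<nu> x i 0)) z"
    unfolding Hp_def higher_pderiv_sum higher_pderiv_smult poly_sum
    by (simp add: lessThan_atLeast0 mult.commute funpow_add)
  finally show ?thesis .
qed

lemma K_char:
  assumes r: "r > 0"
  shows "common_kernel q r \<nu> = {x \<in> carrier_vec (\<nu> * r). \<forall>i<q. Hp r \<nu> x i 0 = 0}"
proof (rule equalityI; rule subsetI)
  fix x assume "x \<in> common_kernel q r \<nu>"
  then have x: "x \<in> carrier_vec (\<nu> * r)" and k: "\<And>z. M0mat q r \<nu> z *\<^sub>v x = 0\<^sub>v q"
    unfolding common_kernel_def mat_kernel_def by (auto simp: M0mat_def)
  have "Hp r \<nu> x i 0 = 0" if i: "i < q" for i
  proof -
    have "\<forall>z. poly (Hp r \<nu> x i 0) z = 0"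
    proof
      fix z
      have "(M0mat q r \<nu> z *\<^sub>v x) $ i = 0" using k[of z] i by simp
      then show "poly (Hp r \<nu> x i 0) z = 0" using M0_entry[OF x i r] by simp
    qed
    then show ?thesis using poly_all_0_iff_0 by blast
  qed
  then show "x \<in> {x \<in> carrier_vec (\<nu> * r). \<forall>i<q. Hp r \<nu> x i 0 = 0}" using x by blast
next
  fix x assume "x \<in> {x \<in> carrier_vec (\<nu> * r). \<forall>i<q. Hp r \<nu> x i 0 = 0}"
  then have x: "x \<in> carrier_vec (\<nu> * r)" and h: "\<forall>i<q. Hp r \<nu> x i 0 = 0" by auto
  have "M0mat q r \<nu> z *\<^sub>v x = 0\<^sub>v q" for z
  proof (rule eq_vecI)
    fix i assume "i < dim_vec (0\<^sub>v q :: complex vec)"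
    then have i: "i < q" by simp
    show "(M0mat q r \<nu> z *\<^sub>v x) $ i = 0\<^sub>v q $ i" using M0_entry[OF x i r] h i by simp
  qed (simp add: M0mat_def)
  then show "x \<in> common_kernel q r \<nu>"
    unfolding common_kernel_def mat_kernel_def using x by (auto simp: M0mat_def)
qed

lemma Mcal_char:
  assumes r: "r > 0" and q: "q > 0"
  shows "mat_kernel (Mcal q r r \<nu> z) = {x \<in> carrier_vec (\<nu> * r). \<forall>i<q. [:-z,1:]^r dvd Hp r \<nu> x i 0}"
proof (rule equalityI; rule subsetI)
  fix x assume "x \<in> mat_kernel (Mcal q r r \<nu> z)"
  then have x: "x \<in> carrier_vec (\<nu> * r)" and k: "Mcal q r r \<nu> z *\<^sub>v x = 0\<^sub>v (r * q)"
    unfolding mat_kernel_def by (auto simp: Mcal_def)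
  have "[:-z,1:]^r dvd Hp r \<nu> x i 0" if i: "i < q" for i
  proof -
    have "\<forall>a<r. poly ((pderiv^^a) (Hp r \<nu> x i 0)) z = 0"
    proof (intro allI impI)
      fix a assume a: "a < r"
      have aq: "a * q + i < r * q"
      proof -
        have "a * q + i < a * q + q" using i by simp
        also have "\<dots> = Suc a * q" by simp
        also have "\<dots> \<le> r * q" using a by (intro mult_right_mono) auto
        finally show ?thesis .
      qed
      have "(Mcal q r r \<nu> z *\<^sub>v x) $ (a * q + i) = 0" using k aq by simp
      then show "poly ((pderiv^^a) (Hp r \<nu> x i 0)) z = 0" using Mcal_entry[OF x i a] by simp
    qed
    then show ?thesis using jet_dvd by blast
  qed
  then show "x \<in> {x \<in> carrier_vec (\<nu> * r). \<forall>i<q. [:-z,1:]^r dvd Hp r \<nu> x i 0}" using x by blast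
next
  fix x assume "x \<in> {x \<in> carrier_vec (\<nu> * r). \<forall>i<q. [:-z,1:]^r dvd Hp r \<nu> x i 0}"
  then have x: "x \<in> carrier_vec (\<nu> * r)" and h: "\<forall>i<q. [:-z,1:]^r dvd Hp r \<nu> x i 0" by auto
  have "(Mcal q r r \<nu> z *\<^sub>v x) $ idx = 0" if idx: "idx < r * q" for idx
  proof -
    have i: "idx mod q < q" using q by simp
    have a: "idx div q < r" using idx by (metis less_mult_imp_div_less)
    have e: "idx = idx div q * q + idx mod q" by simp
    have "\<forall>a<r. poly ((pderiv^^a) (Hp r \<nu> x (idx mod q) 0)) z = 0"
      using h i jet_dvd by blast
    then show ?thesis using Mcal_entry[OF x i a] a e by metis
  qed
  then have "Mcal q r r \<nu> z *\<^sub>v x = 0\<^sub>v (r * q)"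
    by (intro eq_vecI) (auto simp: Mcal_def)
  then show "x \<in> mat_kernel (Mcal q r r \<nu> z)"
    unfolding mat_kernel_def using x by (auto simp: Mcal_def)
qed



lemma K_char2:
  assumes r: "r > 0"
  shows "common_kernel q r \<nu> = {x \<in> carrier_vec (\<nu> * r). \<forall>s<q. Hp r \<nu> x 0 s = 0}"
  unfolding K_char[OF r]
proof (rule equalityI; rule subsetI)
  fix x assume "x \<in> {x \<in> carrier_vec (\<nu> * r). \<forall>i<q. Hp r \<nu> x i 0 = 0}"
  then have x: "x \<in> carrier_vec (\<nu> * r)" and h: "\<forall>i<q. Hp r \<nu> x i 0 = 0" by auto
  have "Hp r \<nu> x 0 s = 0" if "s < q" for s
  proof -
    have "0 + s < q" using that by simp
    from F1[of "\<lambda>f. f = 0", OF _ _ _ h this] show ?thesis by fastforce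
  qed
  then show "x \<in> {x \<in> carrier_vec (\<nu> * r). \<forall>s<q. Hp r \<nu> x 0 s = 0}" using x by blast
next
  fix x assume "x \<in> {x \<in> carrier_vec (\<nu> * r). \<forall>s<q. Hp r \<nu> x 0 s = 0}"
  then have x: "x \<in> carrier_vec (\<nu> * r)" and h: "\<forall>s<q. Hp r \<nu> x 0 s = 0" by auto
  have "Hp r \<nu> x i 0 = 0" if "i < q" for i
    using F2[OF h, of i 0] that by simp
  then show "x \<in> {x \<in> carrier_vec (\<nu> * r). \<forall>i<q. Hp r \<nu> x i 0 = 0}" using x by blast
qed

lemma part2:
  assumes r: "r > 0" and q: "q > 0"
  shows "mat_kernel (Mcal q r r \<nu> z) = common_kernel q r \<nu>"
  unfolding Mcal_char[OF r q] K_char[OF r]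
proof (rule equalityI; rule subsetI)
  fix x assume "x \<in> {x \<in> carrier_vec (\<nu> * r). \<forall>i<q. [:-z,1:]^r dvd Hp r \<nu> x i 0}"
  then have x: "x \<in> carrier_vec (\<nu> * r)" and h: "\<forall>i<q. [:-z,1:]^r dvd Hp r \<nu> x i 0" by auto
  have "[:-z,1:]^r dvd Hp r \<nu> x 0 s" if "s < q" for s
  proof -
    have s0: "0 + s < q" using that by simp
    show ?thesis
    proof (rule F1[of "\<lambda>f. [:-z,1:]^r dvd f", OF _ _ _ h s0])
      show "\<And>f g. [:-z,1:]^r dvd f \<Longrightarrow> [:-z,1:]^r dvd g \<Longrightarrow> [:-z,1:]^r dvd f - g"
        by (rule dvd_diff)
      show "\<And>f. [:-z,1:]^r dvd f \<Longrightarrow> [:-z,1:]^r dvd monom 1 1 * f"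
        by (rule dvd_mult)
      show "\<And>a f. [:-z,1:]^r dvd f \<Longrightarrow> [:-z,1:]^r dvd Polynomial.smult a f"
        by (rule dvd_smult)
    qed
  qed
  note d = this
  have "Hp r \<nu> x 0 s = 0" if "s < q" for s by (rule Hp0_zero[OF r d[OF that]])
  then have "Hp r \<nu> x i 0 = 0" if "i < q" for i
    using F2[of q r \<nu> x i 0] that by simp
  then show "x \<in> {x \<in> carrier_vec (\<nu> * r). \<forall>i<q. Hp r \<nu> x i 0 = 0}" using x by blast
next
  fix x assume "x \<in> {x \<in> carrier_vec (\<nu> * r). \<forall>i<q. Hp r \<nu> x i 0 = 0}"
  then show "x \<in> {x \<in> carrier_vec (\<nu> * r). \<forall>i<q. [:-z,1:]^r dvd Hp r \<nu> x i 0}" by simp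
qed

definition Amat :: "nat \<Rightarrow> nat \<Rightarrow> nat \<Rightarrow> complex mat" where
  "Amat q r \<nu> = mat (min q \<nu> * r) (\<nu> * r) (\<lambda>(a,c). coeff (Polynomial.smult (of_nat ((c div r) choose (a div r)))
      ((pderiv^^(c div r - a div r)) (monom 1 (c mod r)))) (a mod r))"

lemma Amat_dims[simp]: "dim_row (Amat q r \<nu>) = min q \<nu> * r" "dim_col (Amat q r \<nu>) = \<nu> * r"
  unfolding Amat_def by (rule dim_row_mat, rule dim_col_mat)

lemma Amat_entry:
  assumes x: "x \<in> carrier_vec (\<nu> * r)" and a: "a < min q \<nu> * r"
  shows "(Amat q r \<nu> *\<^sub>v x) $ a = coeff (Hp r \<nu> x 0 (a div r)) (a mod r)"
proof -
  have "(Amat q r \<nu> *\<^sub>v x) $ a = row (Amat q r \<nu>) a \<bullet> x"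
    using a by (simp add: index_mult_mat_vec)
  also have "\<dots> = (\<Sum>c\<in>{0..<\<nu>*r}. row (Amat q r \<nu>) a $ c * x $ c)"
    using x by (simp add: scalar_prod_def)
  also have "\<dots> = (\<Sum>c\<in>{0..<\<nu>*r}. Amat q r \<nu> $$ (a,c) * x $ c)"
    using a by (intro sum.cong refl) (simp add: index_row)
  also have "\<dots> = (\<Sum>c\<in>{0..<\<nu>*r}. coeff (Polynomial.smult (x$c * of_nat ((c div r) choose (a div r)))
      ((pderiv^^(c div r - a div r)) (monom 1 (0 + c mod r)))) (a mod r))"
  proof (rule sum.cong[OF refl])
    fix c assume c: "c \<in> {0..<\<nu>*r}"
    have "Amat q r \<nu> $$ (a,c) = coeff (Polynomial.smult (of_nat ((c div r) choose (a div r)))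
      ((pderiv^^(c div r - a div r)) (monom 1 (c mod r)))) (a mod r)"
      using a c unfolding Amat_def by (subst index_mat) auto
    then show "Amat q r \<nu> $$ (a,c) * x $ c = coeff (Polynomial.smult (x$c * of_nat ((c div r) choose (a div r)))
      ((pderiv^^(c div r - a div r)) (monom 1 (0 + c mod r)))) (a mod r)"
      by (simp only: coeff_smult add_0 mult.assoc mult.commute mult.left_commute)
  qed
  also have "\<dots> = coeff (Hp r \<nu> x 0 (a div r)) (a mod r)"
    by (simp only: Hp_def coeff_sum lessThan_atLeast0)
  finally show ?thesis .
qed


lemma Amat_entry2:
  assumes a: "a < min q \<nu> * r" and c: "c < \<nu> * r"
  shows "Amat q r \<nu> $$ (a,c) = coeff (Polynomial.smult (of_nat ((c div r) choose (a div r)))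
      ((pderiv^^(c div r - a div r)) (monom 1 (c mod r)))) (a mod r)"
  using a c unfolding Amat_def by (subst index_mat) auto

lemma Amat_diag:
  assumes a: "a < min q \<nu> * r"
  shows "Amat q r \<nu> $$ (a,a) = 1"
proof -
  have "min q \<nu> * r \<le> \<nu> * r" by (simp add: mult_right_mono)
  then have c: "a < \<nu> * r" using a by linarith
  show ?thesis unfolding Amat_entry2[OF a c] by (simp add: coeff_monom)
qed

lemma Amat_lower:
  assumes a: "a < min q \<nu> * r" and ca: "c < a"
  shows "Amat q r \<nu> $$ (a,c) = 0"
proof -
  have "min q \<nu> * r \<le> \<nu> * r" by (simp add: mult_right_mono)
  then have c: "c < \<nu> * r" using a ca by linarith
  have le: "c div r \<le> a div r" using ca by (simp add: div_le_mono)
  show ?thesis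
  proof (cases "c div r < a div r")
    case True
    then have "(c div r) choose (a div r) = 0" by (simp add: binomial_eq_0)
    then show ?thesis unfolding Amat_entry2[OF a c] by simp
  next
    case False
    then have e: "c div r = a div r" using le by simp
    have "c mod r \<noteq> a mod r"
    proof
      assume "c mod r = a mod r"
      then have "c = a" using e by (metis div_mult_mod_eq)
      then show False using ca by simp
    qed
    then show ?thesis unfolding Amat_entry2[OF a c] e by (simp add: coeff_monom)
  qed
qed

lemma Hp_big_s:
  assumes "\<nu> \<le> s"
  shows "Hp r \<nu> x 0 s = 0"
  unfolding Hp_def
proof (rule sum.neutral, rule ballI)
  fix c assume "c \<in> {..<\<nu> * r}"
  then have "c div r < \<nu>" by (simp add: less_mult_imp_div_less)
  then have "(c div r) choose s = 0" using assms by (simp add: binomial_eq_0)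
  then show "Polynomial.smult (x $ c * of_nat (c div r choose s))
         ((pderiv ^^ (c div r - s)) (monom 1 (0 + c mod r))) = 0" by simp
qed

lemma K_Amat:
  assumes r: "r > 0"
  shows "common_kernel q r \<nu> = mat_kernel (Amat q r \<nu>)"
  unfolding K_char2[OF r]
proof (rule equalityI; rule subsetI)
  fix x assume "x \<in> {x \<in> carrier_vec (\<nu> * r). \<forall>s<q. Hp r \<nu> x 0 s = 0}"
  then have x: "x \<in> carrier_vec (\<nu> * r)" and h: "\<forall>s<q. Hp r \<nu> x 0 s = 0" by auto
  have "Amat q r \<nu> *\<^sub>v x = 0\<^sub>v (min q \<nu> * r)"
  proof (rule eq_vecI)
    fix a assume "a < dim_vec (0\<^sub>v (min q \<nu> * r) :: complex vec)"
    then have a: "a < min q \<nu> * r" by simp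
    then have "a div r < min q \<nu>" by (rule less_mult_imp_div_less)
    then have "a div r < q" by simp
    then show "(Amat q r \<nu> *\<^sub>v x) $ a = 0\<^sub>v (min q \<nu> * r) $ a"
      using Amat_entry[OF x a] h a by simp
  qed simp
  then show "x \<in> mat_kernel (Amat q r \<nu>)" unfolding mat_kernel_def using x by simp
next
  fix x assume "x \<in> mat_kernel (Amat q r \<nu>)"
  then have x: "x \<in> carrier_vec (\<nu> * r)" and k: "Amat q r \<nu> *\<^sub>v x = 0\<^sub>v (min q \<nu> * r)"
    unfolding mat_kernel_def by auto
  have "Hp r \<nu> x 0 s = 0" if s: "s < q" for s
  proof (cases "\<nu> \<le> s")
    case True then show ?thesis by (rule Hp_big_s)
  next
    case False
    then have sm: "s < min q \<nu>" using s by simp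
    show ?thesis
    proof (rule poly_eqI)
      fix m
      show "coeff (Hp r \<nu> x 0 s) m = coeff 0 m"
      proof (cases "m < r")
        case True
        have "s * r + m < s * r + r" using True by simp
        also have "\<dots> = Suc s * r" by simp
        also have "\<dots> \<le> min q \<nu> * r" using sm by (intro mult_right_mono) auto
        finally have a: "s * r + m < min q \<nu> * r" .
        have dm: "(s * r + m) div r = s" "(s * r + m) mod r = m" using True by auto
        have "(Amat q r \<nu> *\<^sub>v x) $ (s * r + m) = 0" using k a by simp
        then show ?thesis using Amat_entry[OF x a] unfolding dm by simp
      next
        case False
        have "degree (Hp r \<nu> x 0 s) < m" using Hp0_degree[OF r, of \<nu> x s] False r by linarith
        then show ?thesis by (simp add: coeff_eq_0)
      qed
    qed
  qed
  then show "x \<in> {x \<in> carrier_vec (\<nu> * r). \<forall>s<q. Hp r \<nu> x 0 s = 0}" using x by simp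
qed



lemma dim_part:
  assumes r: "r > 0"
  shows "subspace_dim (\<nu> * r) (mat_kernel (Amat q r \<nu>)) = \<nu> * r - min q \<nu> * r"
proof -
  define n0 where "n0 = min q \<nu> * r"
  define nc where "nc = \<nu> * r"
  define A where "A = Amat q r \<nu>"
  have n0le: "n0 \<le> nc" unfolding n0_def nc_def by (simp add: mult_right_mono)
  have A: "A \<in> carrier_mat n0 nc" unfolding A_def n0_def nc_def by (rule carrier_matI[OF Amat_dims])
  define U where "U = mat n0 n0 (\<lambda>(i,j). A $$ (i,j))"
  have Uc: "U \<in> carrier_mat n0 n0" unfolding U_def by simp
  have ut: "upper_triangular U"
    unfolding upper_triangular_def U_def A_def n0_def using Amat_lower by auto
  have "det U = prod_list (diag_mat U)" by (rule det_upper_triangular[OF ut Uc])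
  also have "\<dots> = (\<Prod>i = 0..<n0. U $$ (i,i))" using Uc by (simp add: prod_list_diag_prod)
  also have "\<dots> = 1"
    by (rule prod.neutral) (auto simp: U_def A_def n0_def Amat_diag)
  finally have "det U \<noteq> 0" by simp
  from det_non_zero_imp_unit[OF Uc this, unfolded Units_def, of "()"]
  obtain P where P: "P \<in> carrier_mat n0 n0" and PU: "P * U = 1\<^sub>m n0" and UP: "U * P = 1\<^sub>m n0"
    by (auto simp: ring_mat_def)
  have ker: "mat_kernel (P * A) = mat_kernel A" by (rule mat_kernel_mult_eq[OF A P Uc UP])
  have PA: "P * A \<in> carrier_mat n0 nc" using P A by simp
  have PAe: "(P * A) $$ (i,j) = (if i = j then 1 else 0)" if i: "i < n0" and j: "j < n0" for i j
  proof -
    have jn: "j < nc" using j n0le by simp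
    have cc: "col A j = col U j"
      by (rule eq_vecI) (use A Uc j jn in \<open>auto simp: U_def\<close>)
    have "(P * A) $$ (i,j) = row P i \<bullet> col A j" using P A i jn by simp
    also have "\<dots> = row P i \<bullet> col U j" using cc by simp
    also have "\<dots> = (P * U) $$ (i,j)" using P Uc i j by simp
    also have "\<dots> = (if i = j then 1 else 0)" unfolding PU using i j by simp
    finally show ?thesis .
  qed
  have piv: "pivot_fun (P * A) (\<lambda>i. i) nc"
  proof (rule pivot_funI)
    show "dim_row (P * A) = n0" by (rule carrier_matD(1)[OF PA])
  next
    fix i assume "i < n0" then show "i \<le> nc" using n0le by simp
  next
    fix i j assume "i < n0" "j < i" then show "(P * A) $$ (i, j) = 0" using PAe by simp
  next
    fix i assume "i < n0" "Suc i < n0" then show "Suc i > i \<or> Suc i = nc" by simp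
  next
    fix i assume "i < n0" "i < nc" then show "(P * A) $$ (i, i) = 1" using PAe by simp
  next
    fix i i' assume "i < n0" "i < nc" "i' < n0" "i' \<noteq> i"
    then show "(P * A) $$ (i', i) = 0" using PAe by simp
  qed
  have ref: "row_echelon_form (P * A)"
    unfolding row_echelon_form_def using piv A by (auto intro!: exI[of _ "\<lambda>i. i"])
  note fb = find_base_vectors[OF ref PA]
  have rows: "{i. i < n0 \<and> row (P * A) i \<noteq> 0\<^sub>v nc} = {0..<n0}"
  proof (rule equalityI; rule subsetI)
    fix i assume "i \<in> {i. i < n0 \<and> row (P * A) i \<noteq> 0\<^sub>v nc}"
    then show "i \<in> {0..<n0}" by simp
  next
    fix i assume "i \<in> {0..<n0}"
    then have i: "i < n0" by simp
    have dr: "dim_row (P * A) = n0" "dim_col (P * A) = nc" using PA by (auto simp: carrier_matD)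
    have "row (P * A) i $ i = (P * A) $$ (i,i)" using i n0le dr by (intro index_row) auto
    then have "row (P * A) i $ i = 1" using PAe[OF i i] by simp
    moreover have "(0\<^sub>v nc :: complex vec) $ i = 0" using i n0le by simp
    ultimately have "row (P * A) i \<noteq> 0\<^sub>v nc" by force
    then show "i \<in> {i. i < n0 \<and> row (P * A) i \<noteq> 0\<^sub>v nc}" using i by simp
  qed
  interpret K: kernel n0 nc "P * A" by (unfold_locales) (rule PA)
  have "K.dim = card (set (find_base_vectors (P * A)))"
    by (rule K.Ker.dim_basis[OF finite_set fb(3)])
  also have "\<dots> = nc - n0" using fb(4) rows by simp
  finally have d: "K.dim = nc - n0" .
  have "subspace_dim nc (mat_kernel A) = subspace_dim nc (mat_kernel (P * A))" using ker by simp
  also have "\<dots> = K.dim" unfolding subspace_dim_def by simp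
  finally have e1: "subspace_dim nc (mat_kernel A) = K.dim" .
  from e1 d have "subspace_dim nc (mat_kernel A) = nc - n0" by (rule trans)
  then show ?thesis unfolding nc_def n0_def A_def .
qed


theorem lemma7p3:
  fixes q r \<nu> :: nat
  assumes "q > 0" and "r > 0" and "\<nu> > 0"
  shows "subspace_dim (\<nu> * r) (common_kernel q r \<nu>) = (\<nu> - q) * r
         \<and> (\<forall>z. mat_kernel (Mcal q r r \<nu> z) = common_kernel q r \<nu>)"
proof
  have ar: "(\<nu> - q) * r = \<nu> * r - min q \<nu> * r"
  proof (cases "q \<le> \<nu>")
    case True
    then have "min q \<nu> = q" by (rule min_absorb1)
    then show ?thesis by (simp only: diff_mult_distrib)
  next
    case False
    then have "min q \<nu> = \<nu>" by (intro min_absorb2) simp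
    moreover have "\<nu> - q = 0" using False by simp
    ultimately show ?thesis by simp
  qed
  show "subspace_dim (\<nu> * r) (common_kernel q r \<nu>) = (\<nu> - q) * r"
    unfolding K_Amat[OF assms(2)] dim_part[OF assms(2)] ar ..
  show "\<forall>z. mat_kernel (Mcal q r r \<nu> z) = common_kernel q r \<nu>"
    using part2[OF assms(2) assms(1)] by blast
qed

end
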